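(* Let $\mathbf C$ be an admissible category of lattices, $X$ a convergence space, and $L$ a convergence $\mathbf C$-object. For every morphism $\varphi:L\to\mathbb P(X)$ in $\mathbf C^{\mathrm{conv}}$ there is a unique map $\varphi^\dagger:X\to\mathrm{pt}\,L$ such that $(\varphi^\dagger)^{-1}(\ell^\bullet)=\varphi(\ell)$ for every $\ell\in L$, and this map is continuous.
   Context: A filter on an inf-semilattice $L$ is a non-empty upward-closed subset closed under binary meets ($L$ itself allowed); $\mathbb F L$ is the set of filters. A category of lattices has lattices as objects and morphisms preserving finite suprema and infima; it is admissible if every powerset $\mathbb P(X)$ is an object and there are classes of index sets $\mathcal I,\mathcal J$ such that morphisms $L\to L'$ are exactly the monotone maps preserving all existing $I$-indexed infima ($I\in\mathcal I$) and $J$-indexed suprema ($J\in\mathcal J$). A convergence $\mathbf C$-object is $(L,\lim_L)$ with $L$ a $\mathbf C$-object and $\lim_L:\mathbb F L\to L$ monotone; morphisms $\varphi:L\to L'$ of $\mathbf C^{\mathrm{conv}}$ are $\mathbf C$-morphisms with $\lim_{L'}\mathcal F\le\varphi(\lim_L\varphi^{-1}(\mathcal F))$ for all $\mathcal F\in\mathbb F L'$. A convergence space is a set $X$ with a relation $\to$ between filters of subsets of $X$ and points with $\{S:x\in S\}\to x$ and $\mathcal F\to x,\mathcal F\subseteq\mathcal G\Rightarrow\mathcal G\to x$; $f:X\to Y$ is continuous if $\mathcal F\to x$ implies $f[\mathcal F]\to f(x)$, $f[\mathcal F]=\{B:f^{-1}(B)\in\mathcal F\}$. $\mathbb P(X)$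 is the powerset with $\lim\mathcal F=\{x:\mathcal F\to x\}$. With $\mathbb P(1)=\{\emptyset,\{*\}\}$ and $\lim_{\mathbb P(1)}$ constantly $\{*\}$, $\mathrm{pt}\,L$ is the set of $\mathbf C^{\mathrm{conv}}$-morphisms $L\to\mathbb P(1)$, $\ell^\bullet=\{\psi\in\mathrm{pt}\,L:\psi(\ell)=\{*\}\}$, and $\mathrm{pt}\,L$ is a convergence space with $\mathcal F\to\psi$ iff $\psi\in(\lim_L\{\ell:\ell^\bullet\in\mathcal F\})^\bullet$. *)

theory Defs
  imports Main "HOL-Library.FuncSet"
begin

section \<open>Posets given as a carrier set inside an ordered type\<close>

definition is_inf :: "'a::order set \<Rightarrow> 'a set \<Rightarrow> 'a \<Rightarrow> bool" where
  "is_inf A S m \<longleftrightarrow> m \<in> A \<and> (\<forall>s\<in>S. m \<le> s) \<and> (\<forall>y\<in>A. (\<forall>s\<in>S. y \<le> s) \<longrightarrow> y \<le> m)"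

definition is_sup :: "'a::order set \<Rightarrow> 'a set \<Rightarrow> 'a \<Rightarrow> bool" where
  "is_sup A S m \<longleftrightarrow> m \<in> A \<and> (\<forall>s\<in>S. s \<le> m) \<and> (\<forall>y\<in>A. (\<forall>s\<in>S. s \<le> y) \<longrightarrow> m \<le> y)"

definition fin_lattice :: "'a::order set \<Rightarrow> bool" where
  "fin_lattice A \<longleftrightarrow> (\<forall>S\<subseteq>A. finite S \<longrightarrow> (\<exists>m. is_inf A S m) \<and> (\<exists>m. is_sup A S m))"

text \<open>Filters of an inf-semilattice (the whole carrier allowed).\<close>
definition filters :: "'a::order set \<Rightarrow> 'a set set" where
  "filters A = {F. F \<subseteq> A \<and> F \<noteq> {}
      \<and> (\<forall>x\<in>F. \<forall>y\<in>A. x \<le> y \<longrightarrow> y \<in> F)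
      \<and> (\<forall>x\<in>F. \<forall>y\<in>F. \<forall>m. is_inf A {x, y} m \<longrightarrow> m \<in> F)}"

section \<open>Morphisms of the admissible category C given by index classes I, J\<close>

definition C_hom :: "'i set set \<Rightarrow> 'i set set \<Rightarrow> 'a::order set \<Rightarrow> 'b::order set \<Rightarrow> ('a \<Rightarrow> 'b) \<Rightarrow> bool" where
  "C_hom II JJ A B \<phi> \<longleftrightarrow>
     \<phi> \<in> A \<rightarrow>\<^sub>E B
   \<and> (\<forall>x\<in>A. \<forall>y\<in>A. x \<le> y \<longrightarrow> \<phi> x \<le> \<phi> y)
   \<and> (\<forall>S\<subseteq>A. finite S \<longrightarrow> (\<forall>m. is_inf A S m \<longrightarrow> is_inf B (\<phi> ` S) (\<phi> m))
                          \<and> (\<forall>m. is_sup A S m \<longrightarrow> is_sup B (\<phi> ` S) (\<phi> m)))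
   \<and> (\<forall>I\<in>II. \<forall>f. (\<forall>i\<in>I. f i \<in> A) \<longrightarrow>
          (\<forall>m. is_inf A (f ` I) m \<longrightarrow> is_inf B (\<phi> ` f ` I) (\<phi> m)))
   \<and> (\<forall>J\<in>JJ. \<forall>f. (\<forall>j\<in>J. f j \<in> A) \<longrightarrow>
          (\<forall>m. is_sup A (f ` J) m \<longrightarrow> is_sup B (\<phi> ` f ` J) (\<phi> m)))"

definition conv_obj :: "'a::order set \<Rightarrow> ('a set \<Rightarrow> 'a) \<Rightarrow> bool" where
  "conv_obj A lim \<longleftrightarrow> fin_lattice A
     \<and> (\<forall>F\<in>filters A. lim F \<in> A)
     \<and> (\<forall>F\<in>filters A. \<forall>G\<in>filters A. F \<subseteq> G \<longrightarrow> lim F \<le> lim G)"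

definition conv_hom :: "'i set set \<Rightarrow> 'i set set \<Rightarrow> 'a::order set \<Rightarrow> ('a set \<Rightarrow> 'a)
     \<Rightarrow> 'b::order set \<Rightarrow> ('b set \<Rightarrow> 'b) \<Rightarrow> ('a \<Rightarrow> 'b) \<Rightarrow> bool" where
  "conv_hom II JJ A limA B limB \<phi> \<longleftrightarrow> C_hom II JJ A B \<phi>
     \<and> (\<forall>F\<in>filters B. limB F \<le> \<phi> (limA {l\<in>A. \<phi> l \<in> F}))"

definition conv_space :: "'x set \<Rightarrow> ('x set set \<Rightarrow> 'x \<Rightarrow> bool) \<Rightarrow> bool" where
  "conv_space X cv \<longleftrightarrow>
     (\<forall>F x. cv F x \<longrightarrow> F \<in> filters (Pow X) \<and> x \<in> X)
   \<and> (\<forall>x\<in>X. cv {S\<in>Pow X. x \<in> S} x)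
   \<and> (\<forall>F G x. cv F x \<longrightarrow> G \<in> filters (Pow X) \<longrightarrow> F \<subseteq> G \<longrightarrow> cv G x)"

definition fimage :: "'x set \<Rightarrow> 'y set \<Rightarrow> ('x \<Rightarrow> 'y) \<Rightarrow> 'x set set \<Rightarrow> 'y set set" where
  "fimage X Y f F = {B\<in>Pow Y. {x\<in>X. f x \<in> B} \<in> F}"

definition continuous_conv :: "'x set \<Rightarrow> ('x set set \<Rightarrow> 'x \<Rightarrow> bool) \<Rightarrow> 'y set
     \<Rightarrow> ('y set set \<Rightarrow> 'y \<Rightarrow> bool) \<Rightarrow> ('x \<Rightarrow> 'y) \<Rightarrow> bool" where
  "continuous_conv X cX Y cY f \<longleftrightarrow> (\<forall>x\<in>X. f x \<in> Y)
     \<and> (\<forall>F x. cX F x \<longrightarrow> cY (fimage X Y f F) (f x))"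

definition limP :: "'x set \<Rightarrow> ('x set set \<Rightarrow> 'x \<Rightarrow> bool) \<Rightarrow> 'x set set \<Rightarrow> 'x set" where
  "limP X cv F = {x\<in>X. cv F x}"

text \<open>P(1) is the powerset of unit, i.e. UNIV :: unit set set, with constant limit {*}.\<close>
definition pt :: "'i set set \<Rightarrow> 'i set set \<Rightarrow> 'a::order set \<Rightarrow> ('a set \<Rightarrow> 'a) \<Rightarrow> ('a \<Rightarrow> unit set) set" where
  "pt II JJ A lim = {\<psi>. conv_hom II JJ A lim (Pow (UNIV::unit set)) (\<lambda>_. UNIV) \<psi>}"

definition bullet :: "'i set set \<Rightarrow> 'i set set \<Rightarrow> 'a::order set \<Rightarrow> ('a set \<Rightarrow> 'a) \<Rightarrow> 'a \<Rightarrow> ('a \<Rightarrow> unit set) set" where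
  "bullet II JJ A lim l = {\<psi>\<in>pt II JJ A lim. \<psi> l = UNIV}"

definition pt_conv :: "'i set set \<Rightarrow> 'i set set \<Rightarrow> 'a::order set \<Rightarrow> ('a set \<Rightarrow> 'a)
     \<Rightarrow> ('a \<Rightarrow> unit set) set set \<Rightarrow> ('a \<Rightarrow> unit set) \<Rightarrow> bool" where
  "pt_conv II JJ A lim F \<psi> \<longleftrightarrow> F \<in> filters (Pow (pt II JJ A lim)) \<and> \<psi> \<in> pt II JJ A lim
     \<and> \<psi> \<in> bullet II JJ A lim (lim {l\<in>A. bullet II JJ A lim l \<in> F})"

end

theory Submission
  imports Defs "HOL-Library.FuncSet"
begin


lemma filtersD0:
  assumes "F \<in> filters A"
  shows "F \<subseteq> A \<and> F \<noteq> {} \<and> (\<forall>x\<in>F. \<forall>y\<in>A. x \<le> y \<longrightarrow> y \<in> F) \<and>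
   (\<forall>x\<in>F. \<forall>y\<in>F. \<forall>m. is_inf A {x, y} m \<longrightarrow> m \<in> F)"
  using assms unfolding filters_def mem_Collect_eq .
lemmas filtersD = filtersD0[THEN conjunct1] filtersD0[THEN conjunct2, THEN conjunct1]
  filtersD0[THEN conjunct2, THEN conjunct2, THEN conjunct1]
  filtersD0[THEN conjunct2, THEN conjunct2, THEN conjunct2]

lemma filtersI:
  assumes "F \<subseteq> A" "F \<noteq> {}" "\<And>x y. x\<in>F \<Longrightarrow> y\<in>A \<Longrightarrow> x \<le> y \<Longrightarrow> y \<in> F"
   "\<And>x y m. x\<in>F \<Longrightarrow> y\<in>F \<Longrightarrow> is_inf A {x, y} m \<Longrightarrow> m \<in> F"
  shows "F \<in> filters A"
  unfolding filters_def mem_Collect_eq using assms by blast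

lemma C_homD0:
  assumes "C_hom II JJ A B \<phi>"
  shows "\<phi> \<in> A \<rightarrow>\<^sub>E B
   \<and> (\<forall>x\<in>A. \<forall>y\<in>A. x \<le> y \<longrightarrow> \<phi> x \<le> \<phi> y)
   \<and> (\<forall>S\<subseteq>A. finite S \<longrightarrow> (\<forall>m. is_inf A S m \<longrightarrow> is_inf B (\<phi> ` S) (\<phi> m))
                          \<and> (\<forall>m. is_sup A S m \<longrightarrow> is_sup B (\<phi> ` S) (\<phi> m)))
   \<and> (\<forall>I\<in>II. \<forall>f. (\<forall>i\<in>I. f i \<in> A) \<longrightarrow>
          (\<forall>m. is_inf A (f ` I) m \<longrightarrow> is_inf B (\<phi> ` f ` I) (\<phi> m)))
   \<and> (\<forall>J\<in>JJ. \<forall>f. (\<forall>j\<in>J. f j \<in> A) \<longrightarrow>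
          (\<forall>m. is_sup A (f ` J) m \<longrightarrow> is_sup B (\<phi> ` f ` J) (\<phi> m)))"
  using assms unfolding C_hom_def .

lemma C_hom_fun: assumes "C_hom II JJ A B \<phi>" shows "\<phi> \<in> A \<rightarrow>\<^sub>E B"
  using C_homD0[OF assms] by (elim conjE)
lemma C_hom_mono: assumes "C_hom II JJ A B \<phi>" "x\<in>A" "y\<in>A" "x \<le> y" shows "\<phi> x \<le> \<phi> y"
proof -
  have h: "\<forall>x\<in>A. \<forall>y\<in>A. x \<le> y \<longrightarrow> \<phi> x \<le> \<phi> y" using C_homD0[OF assms(1)] by (elim conjE)
  show ?thesis using h assms(2-4) by blast
qed
lemma C_hom_inf: assumes "C_hom II JJ A B \<phi>" "S\<subseteq>A" "finite S" "is_inf A S m" shows "is_inf B (\<phi> ` S) (\<phi> m)"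
proof -
  have h: "\<forall>S\<subseteq>A. finite S \<longrightarrow> (\<forall>m. is_inf A S m \<longrightarrow> is_inf B (\<phi> ` S) (\<phi> m))
                          \<and> (\<forall>m. is_sup A S m \<longrightarrow> is_sup B (\<phi> ` S) (\<phi> m))" using C_homD0[OF assms(1)] by (elim conjE)
  show ?thesis using h assms(2-4) by blast
qed
lemma C_hom_sup: assumes "C_hom II JJ A B \<phi>" "S\<subseteq>A" "finite S" "is_sup A S m" shows "is_sup B (\<phi> ` S) (\<phi> m)"
proof -
  have h: "\<forall>S\<subseteq>A. finite S \<longrightarrow> (\<forall>m. is_inf A S m \<longrightarrow> is_inf B (\<phi> ` S) (\<phi> m))
                          \<and> (\<forall>m. is_sup A S m \<longrightarrow> is_sup B (\<phi> ` S) (\<phi> m))" using C_homD0[OF assms(1)] by (elim conjE)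
  show ?thesis using h assms(2-4) by blast
qed
lemma C_hom_Iinf: assumes "C_hom II JJ A B \<phi>" "I\<in>II" "\<forall>i\<in>I. f i \<in> A" "is_inf A (f ` I) m" shows "is_inf B (\<phi> ` f ` I) (\<phi> m)"
proof -
  have h: "\<forall>I\<in>II. \<forall>f. (\<forall>i\<in>I. f i \<in> A) \<longrightarrow>
          (\<forall>m. is_inf A (f ` I) m \<longrightarrow> is_inf B (\<phi> ` f ` I) (\<phi> m))" using C_homD0[OF assms(1)] by (elim conjE)
  show ?thesis using h assms(2-4) by blast
qed
lemma C_hom_Jsup: assumes "C_hom II JJ A B \<phi>" "J\<in>JJ" "\<forall>j\<in>J. f j \<in> A" "is_sup A (f ` J) m" shows "is_sup B (\<phi> ` f ` J) (\<phi> m)"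
proof -
  have h: "\<forall>J\<in>JJ. \<forall>f. (\<forall>j\<in>J. f j \<in> A) \<longrightarrow>
          (\<forall>m. is_sup A (f ` J) m \<longrightarrow> is_sup B (\<phi> ` f ` J) (\<phi> m))" using C_homD0[OF assms(1)] by (elim conjE)
  show ?thesis using h assms(2-4) by blast
qed

lemma conv_obj_top:
  assumes "conv_obj A lim"
  shows "\<exists>t. is_inf A {} t"
proof -
  have "fin_lattice A" using assms unfolding conv_obj_def by (elim conjE)
  then show ?thesis unfolding fin_lattice_def by (meson empty_subsetI finite.emptyI)
qed

lemma conv_obj_lim: "conv_obj A lim \<Longrightarrow> F \<in> filters A \<Longrightarrow> lim F \<in> A"
  unfolding conv_obj_def by blast

lemma conv_space_D0: "conv_space X cv \<Longrightarrow> (\<forall>F x. cv F x \<longrightarrow> F \<in> filters (Pow X) \<and> x \<in> X)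
   \<and> (\<forall>x\<in>X. cv {S\<in>Pow X. x \<in> S} x)
   \<and> (\<forall>F G x. cv F x \<longrightarrow> G \<in> filters (Pow X) \<longrightarrow> F \<subseteq> G \<longrightarrow> cv G x)"
  unfolding conv_space_def .

lemma conv_space_filt: "conv_space X cv \<Longrightarrow> cv F x \<Longrightarrow> F \<in> filters (Pow X)"
  using conv_space_D0 by blast
lemma conv_space_pt: "conv_space X cv \<Longrightarrow> cv F x \<Longrightarrow> x \<in> X"
  using conv_space_D0 by blast
lemma conv_space_princ: "conv_space X cv \<Longrightarrow> x\<in>X \<Longrightarrow> cv {S\<in>Pow X. x \<in> S} x"
  using conv_space_D0 by blast
lemma conv_space_up: "conv_space X cv \<Longrightarrow> cv F x \<Longrightarrow> G \<in> filters (Pow X) \<Longrightarrow> F \<subseteq> G \<Longrightarrow> cv G x"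
  using conv_space_D0 by blast

lemma conv_hom_C: "conv_hom II JJ A limA B limB \<phi> \<Longrightarrow> C_hom II JJ A B \<phi>"
  unfolding conv_hom_def by blast
lemma conv_hom_lim: "conv_hom II JJ A limA B limB \<phi> \<Longrightarrow> F\<in>filters B \<Longrightarrow> limB F \<le> \<phi> (limA {l\<in>A. \<phi> l \<in> F})"
  unfolding conv_hom_def by blast

lemma filt:
  assumes "conv_obj A lim" "C_hom II JJ A (Pow X) \<phi>" "F \<in> filters (Pow X)"
  shows "{l\<in>A. \<phi> l \<in> F} \<in> filters A"
proof (rule filtersI)
  obtain t where t: "is_inf A {} t" using assms(1) conv_obj_top by blast
  have "is_inf (Pow X) (\<phi> ` {}) (\<phi> t)" using C_hom_inf[OF assms(2) _ _ t] by simp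
  hence pt: "\<phi> t = X" unfolding is_inf_def by auto
  obtain S where S: "S \<in> F" using filtersD(2)[OF assms(3)] by blast
  have "S \<subseteq> X" using S filtersD(1)[OF assms(3)] by blast
  hence XF: "X \<in> F" using S filtersD(3)[OF assms(3)] by blast
  have tA: "t \<in> A" using t unfolding is_inf_def by auto
  show "{l \<in> A. \<phi> l \<in> F} \<subseteq> A" by auto
  show "{l \<in> A. \<phi> l \<in> F} \<noteq> {}" using tA pt XF by auto
next
  fix x y assume a: "x \<in> {l \<in> A. \<phi> l \<in> F}" "y \<in> A" "x \<le> y"
  then have "\<phi> x \<le> \<phi> y" using C_hom_mono[OF assms(2)] by blast
  moreover have "\<phi> y \<in> Pow X" using a(2) C_hom_fun[OF assms(2)] by blast
  moreover have "\<phi> x \<in> F" using a by blast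
  ultimately show "y \<in> {l \<in> A. \<phi> l \<in> F}" using filtersD(3)[OF assms(3)] a(2) by blast
next
  fix x y m assume a: "x \<in> {l \<in> A. \<phi> l \<in> F}" "y \<in> {l \<in> A. \<phi> l \<in> F}" "is_inf A {x, y} m"
  have "{x,y} \<subseteq> A" "finite {x,y}" using a by auto
  then have "is_inf (Pow X) (\<phi> ` {x,y}) (\<phi> m)" using C_hom_inf[OF assms(2)] a(3) by blast
  then have "is_inf (Pow X) {\<phi> x, \<phi> y} (\<phi> m)" by simp
  then have "\<phi> m \<in> F" using filtersD(4)[OF assms(3)] a by blast
  moreover have "m \<in> A" using a(3) unfolding is_inf_def by blast
  ultimately show "m \<in> {l \<in> A. \<phi> l \<in> F}" by blast
qed

lemma inf_eval:
  assumes "x \<in> X" "is_inf (Pow X) S m"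
  shows "is_inf (Pow (UNIV::unit set)) ((\<lambda>T. if x\<in>T then UNIV else {}) ` S) (if x\<in>m then UNIV else {})"
proof -
  have key: "x \<in> m \<longleftrightarrow> (\<forall>s\<in>S. x\<in>s)"
  proof
    assume "x\<in>m" then show "\<forall>s\<in>S. x\<in>s" using assms(2) unfolding is_inf_def by auto
  next
    assume a: "\<forall>s\<in>S. x\<in>s"
    have "X \<inter> \<Inter>S \<in> Pow X" by auto
    moreover have "\<forall>s\<in>S. X \<inter> \<Inter>S \<le> s" by auto
    ultimately have "X \<inter> \<Inter>S \<le> m" using assms(2) unfolding is_inf_def by blast
    then show "x\<in>m" using assms(1) a by auto
  qed
  show ?thesis unfolding is_inf_def using key by auto
qed


lemma sup_eval:
  assumes "x \<in> X" "is_sup (Pow X) S m"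
  shows "is_sup (Pow (UNIV::unit set)) ((\<lambda>T. if x\<in>T then UNIV else {}) ` S) (if x\<in>m then UNIV else {})"
proof -
  have key: "x \<in> m \<longleftrightarrow> (\<exists>s\<in>S. x\<in>s)"
  proof
    assume a: "x\<in>m"
    have "\<Union>S \<in> Pow X" using assms(2) unfolding is_sup_def by auto
    moreover have "\<forall>s\<in>S. s \<le> \<Union>S" by auto
    ultimately have "m \<le> \<Union>S" using assms(2) unfolding is_sup_def by blast
    then show "\<exists>s\<in>S. x\<in>s" using a by auto
  next
    assume "\<exists>s\<in>S. x\<in>s" then show "x\<in>m" using assms(2) unfolding is_sup_def by auto
  qed
  show ?thesis unfolding is_sup_def using key by auto
qed




lemma C_homI:
  assumes "\<phi> \<in> A \<rightarrow>\<^sub>E B"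
   "\<And>x y. x\<in>A \<Longrightarrow> y\<in>A \<Longrightarrow> x \<le> y \<Longrightarrow> \<phi> x \<le> \<phi> y"
   "\<And>S m. S\<subseteq>A \<Longrightarrow> finite S \<Longrightarrow> is_inf A S m \<Longrightarrow> is_inf B (\<phi> ` S) (\<phi> m)"
   "\<And>S m. S\<subseteq>A \<Longrightarrow> finite S \<Longrightarrow> is_sup A S m \<Longrightarrow> is_sup B (\<phi> ` S) (\<phi> m)"
   "\<And>I f m. I\<in>II \<Longrightarrow> (\<forall>i\<in>I. f i \<in> A) \<Longrightarrow> is_inf A (f ` I) m \<Longrightarrow> is_inf B (\<phi> ` f ` I) (\<phi> m)"
   "\<And>J f m. J\<in>JJ \<Longrightarrow> (\<forall>j\<in>J. f j \<in> A) \<Longrightarrow> is_sup A (f ` J) m \<Longrightarrow> is_sup B (\<phi> ` f ` J) (\<phi> m)"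
  shows "C_hom II JJ A B \<phi>"
  unfolding C_hom_def by (intro conjI ballI allI impI; rule assms; assumption)

lemma filt_top: "F \<in> filters (Pow X) \<Longrightarrow> X \<in> F"
proof -
  assume F: "F \<in> filters (Pow X)"
  obtain S where S: "S \<in> F" using filtersD(2)[OF F] by blast
  have "S \<subseteq> X" using S filtersD(1)[OF F] by blast
  thus "X \<in> F" using S filtersD(3)[OF F] by blast
qed

lemma point_in_pt:
  assumes cs: "conv_space X cv" and co: "conv_obj A lim"
    and ch: "conv_hom II JJ A lim (Pow X) (limP X cv) \<phi>" and x: "x \<in> X"
  shows "(\<lambda>l\<in>A. if x \<in> \<phi> l then (UNIV::unit set) else {}) \<in> pt II JJ A lim"
proof -
  define E where "E = (\<lambda>S. if x\<in>S then (UNIV::unit set) else {})"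
  define \<psi> where "\<psi> = (\<lambda>l\<in>A. E (\<phi> l))"
  have CH: "C_hom II JJ A (Pow X) \<phi>" using conv_hom_C[OF ch] .
  have im: "\<psi> ` S = E ` \<phi> ` S" if "S \<subseteq> A" for S
    using that unfolding \<psi>_def by (auto simp: image_iff)
  have psiA: "l \<in> A \<Longrightarrow> \<psi> l = E (\<phi> l)" for l unfolding \<psi>_def by simp
  have isinfA: "m \<in> A" if "is_inf A S m" for S m using that unfolding is_inf_def by blast
  have issupA: "m \<in> A" if "is_sup A S m" for S m using that unfolding is_sup_def by blast
  have C: "C_hom II JJ A (Pow UNIV) \<psi>"
  proof (rule C_homI)
    show "\<psi> \<in> A \<rightarrow>\<^sub>E Pow UNIV" unfolding \<psi>_def by auto
  next
    fix a b assume "a \<in> A" "b \<in> A" "a \<le> b"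
    then have "\<phi> a \<le> \<phi> b" using C_hom_mono[OF CH] by blast
    then show "\<psi> a \<le> \<psi> b" using \<open>a \<in> A\<close> \<open>b \<in> A\<close> unfolding \<psi>_def E_def by auto
  next
    fix S m assume a: "S \<subseteq> A" "finite S" "is_inf A S m"
    have "is_inf (Pow X) (\<phi> ` S) (\<phi> m)" using C_hom_inf[OF CH a] .
    from inf_eval[OF x this] show "is_inf (Pow UNIV) (\<psi> ` S) (\<psi> m)"
      using im[OF a(1)] psiA[OF isinfA[OF a(3)]] unfolding E_def by simp
  next
    fix S m assume a: "S \<subseteq> A" "finite S" "is_sup A S m"
    have "is_sup (Pow X) (\<phi> ` S) (\<phi> m)" using C_hom_sup[OF CH a] .
    from sup_eval[OF x this] show "is_sup (Pow UNIV) (\<psi> ` S) (\<psi> m)"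
      using im[OF a(1)] psiA[OF issupA[OF a(3)]] unfolding E_def by simp
  next
    fix I f m assume a: "I \<in> II" "\<forall>i\<in>I. f i \<in> A" "is_inf A (f ` I) m"
    have "is_inf (Pow X) (\<phi> ` f ` I) (\<phi> m)" using C_hom_Iinf[OF CH a] .
    moreover have fI: "f ` I \<subseteq> A" using a(2) by blast
    ultimately show "is_inf (Pow UNIV) (\<psi> ` f ` I) (\<psi> m)"
      using inf_eval[OF x] im[OF fI] psiA[OF isinfA[OF a(3)]] unfolding E_def by simp
  next
    fix J f m assume a: "J \<in> JJ" "\<forall>j\<in>J. f j \<in> A" "is_sup A (f ` J) m"
    have "is_sup (Pow X) (\<phi> ` f ` J) (\<phi> m)" using C_hom_Jsup[OF CH a] .
    moreover have fI: "f ` J \<subseteq> A" using a(2) by blast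
    ultimately show "is_sup (Pow UNIV) (\<psi> ` f ` J) (\<psi> m)"
      using sup_eval[OF x] im[OF fI] psiA[OF issupA[OF a(3)]] unfolding E_def by simp
  qed
  have L: "UNIV \<le> \<psi> (lim {l\<in>A. \<psi> l \<in> F})" if F: "F \<in> filters (Pow (UNIV::unit set))" for F
  proof -
    define F' where "F' = {S\<in>Pow X. E S \<in> F}"
    have UF: "UNIV \<in> F" using filt_top[OF F] .
    have F'f: "F' \<in> filters (Pow X)"
    proof (rule filtersI)
      show "F' \<subseteq> Pow X" unfolding F'_def by blast
      have "E X = UNIV" using x unfolding E_def by simp
      then have "X \<in> F'" using UF unfolding F'_def by simp
      then show "F' \<noteq> {}" by blast
    next
      fix S T assume a: "S \<in> F'" "T \<in> Pow X" "S \<le> T"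
      then have "E S \<le> E T" unfolding E_def by auto
      moreover have "E S \<in> F" using a unfolding F'_def by blast
      ultimately have "E T \<in> F" using filtersD(3)[OF F] by blast
      then show "T \<in> F'" using a(2) unfolding F'_def by blast
    next
      fix S T m assume a: "S \<in> F'" "T \<in> F'" "is_inf (Pow X) {S, T} m"
      have "is_inf (Pow UNIV) (E ` {S,T}) (E m)" using inf_eval[OF x a(3)] unfolding E_def by simp
      then have "is_inf (Pow UNIV) {E S, E T} (E m)" by simp
      moreover have "E S \<in> F" "E T \<in> F" using a unfolding F'_def by auto
      ultimately have "E m \<in> F" using filtersD(4)[OF F] by blast
      moreover have "m \<in> Pow X" using a(3) unfolding is_inf_def by blast
      ultimately show "m \<in> F'" unfolding F'_def by blast
    qed
    have "{S\<in>Pow X. x \<in> S} \<subseteq> F'" using UF unfolding F'_def E_def by auto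
    then have "cv F' x" using conv_space_up[OF cs conv_space_princ[OF cs x] F'f] by blast
    then have "x \<in> limP X cv F'" unfolding limP_def using x by blast
    then have xin: "x \<in> \<phi> (lim {l\<in>A. \<phi> l \<in> F'})" using conv_hom_lim[OF ch F'f] by blast
    have eq: "{l\<in>A. \<phi> l \<in> F'} = {l\<in>A. \<psi> l \<in> F}"
    proof -
      have "\<phi> l \<in> Pow X" if "l \<in> A" for l using C_hom_fun[OF CH] that by blast
      then show ?thesis unfolding F'_def \<psi>_def by auto
    qed
    have "lim {l\<in>A. \<phi> l \<in> F'} \<in> A" using conv_obj_lim[OF co filt[OF co CH F'f]] .
    then show ?thesis using xin eq psiA unfolding E_def by simp
  qed
  have "conv_hom II JJ A lim (Pow UNIV) (\<lambda>_. UNIV) \<psi>"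
    unfolding conv_hom_def using C L by blast
  then show ?thesis unfolding pt_def \<psi>_def E_def by simp
qed



lemma is_inf_Int: "a \<subseteq> X \<Longrightarrow> b \<subseteq> X \<Longrightarrow> is_inf (Pow X) {a,b} (a \<inter> b)"
  unfolding is_inf_def by auto

lemma pt_fun: "\<psi> \<in> pt II JJ A lim \<Longrightarrow> \<psi> \<in> A \<rightarrow>\<^sub>E Pow (UNIV::unit set)"
  unfolding pt_def using conv_hom_C C_hom_fun by blast

lemma cont_part:
  assumes cs: "conv_space X cv" and co: "conv_obj A lim"
    and ch: "conv_hom II JJ A lim (Pow X) (limP X cv) \<phi>"
    and g: "g \<in> X \<rightarrow>\<^sub>E pt II JJ A lim"
    and spec: "\<forall>l\<in>A. {x\<in>X. g x \<in> bullet II JJ A lim l} = \<phi> l"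
  shows "continuous_conv X cv (pt II JJ A lim) (pt_conv II JJ A lim) g"
  unfolding continuous_conv_def
proof (intro conjI allI impI ballI)
  let ?P = "pt II JJ A lim"
  have CH: "C_hom II JJ A (Pow X) \<phi>" using conv_hom_C[OF ch] .
  show "g x \<in> ?P" if "x \<in> X" for x using g that by blast
  fix F x assume cv: "cv F x"
  have F: "F \<in> filters (Pow X)" using conv_space_filt[OF cs cv] .
  have x: "x \<in> X" using conv_space_pt[OF cs cv] .
  define G where "G = fimage X ?P g F"
  have Gf: "G \<in> filters (Pow ?P)"
  proof (rule filtersI)
    show "G \<subseteq> Pow ?P" unfolding G_def fimage_def by blast
    have "{y\<in>X. g y \<in> ?P} = X" using g by blast
    then have "?P \<in> G" using filt_top[OF F] unfolding G_def fimage_def by simp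
    then show "G \<noteq> {}" by blast
  next
    fix B1 B2 assume a: "B1 \<in> G" "B2 \<in> Pow ?P" "B1 \<le> B2"
    have "{y\<in>X. g y \<in> B1} \<in> F" using a(1) unfolding G_def fimage_def by blast
    moreover have "{y\<in>X. g y \<in> B1} \<le> {y\<in>X. g y \<in> B2}" using a(3) by blast
    moreover have "{y\<in>X. g y \<in> B2} \<in> Pow X" by blast
    ultimately have "{y\<in>X. g y \<in> B2} \<in> F" using filtersD(3)[OF F] by blast
    then show "B2 \<in> G" using a(2) unfolding G_def fimage_def by blast
  next
    fix B1 B2 m assume a: "B1 \<in> G" "B2 \<in> G" "is_inf (Pow ?P) {B1, B2} m"
    have p1: "{y\<in>X. g y \<in> B1} \<in> F" using a(1) unfolding G_def fimage_def by blast
    have p2: "{y\<in>X. g y \<in> B2} \<in> F" using a(2) unfolding G_def fimage_def by blast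
    have "B1 \<subseteq> ?P" using a(1) unfolding G_def fimage_def by blast
    then have "B1 \<inter> B2 \<in> Pow ?P" by blast
    moreover have "\<forall>s\<in>{B1,B2}. B1 \<inter> B2 \<le> s" by blast
    ultimately have sub: "B1 \<inter> B2 \<le> m" using a(3) unfolding is_inf_def by blast
    have mP: "m \<in> Pow ?P" using a(3) unfolding is_inf_def by blast
    have "is_inf (Pow X) {{y\<in>X. g y \<in> B1}, {y\<in>X. g y \<in> B2}} ({y\<in>X. g y \<in> B1} \<inter> {y\<in>X. g y \<in> B2})"
      by (rule is_inf_Int) auto
    then have "{y\<in>X. g y \<in> B1} \<inter> {y\<in>X. g y \<in> B2} \<in> F" using filtersD(4)[OF F] p1 p2 by blast
    moreover have "{y\<in>X. g y \<in> B1} \<inter> {y\<in>X. g y \<in> B2} \<le> {y\<in>X. g y \<in> m}" using sub by blast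
    moreover have "{y\<in>X. g y \<in> m} \<in> Pow X" by blast
    ultimately have "{y\<in>X. g y \<in> m} \<in> F" using filtersD(3)[OF F] by blast
    then show "m \<in> G" using mP unfolding G_def fimage_def by blast
  qed
  have gx: "g x \<in> ?P" using g x by blast
  have eq: "{l\<in>A. bullet II JJ A lim l \<in> G} = {l\<in>A. \<phi> l \<in> F}"
  proof -
    have "bullet II JJ A lim l \<in> Pow ?P" for l unfolding bullet_def by blast
    then show ?thesis using spec unfolding G_def fimage_def by auto
  qed
  define L where "L = lim {l\<in>A. \<phi> l \<in> F}"
  have LA: "L \<in> A" unfolding L_def using conv_obj_lim[OF co filt[OF co CH F]] .
  have "x \<in> limP X cv F" unfolding limP_def using x cv by blast
  then have "x \<in> \<phi> L" using conv_hom_lim[OF ch F] unfolding L_def by blast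
  then have "g x \<in> bullet II JJ A lim L" using spec LA by blast
  then show "pt_conv II JJ A lim (fimage X ?P g F) (g x)"
    unfolding pt_conv_def using Gf gx eq unfolding G_def L_def by simp
qed



lemma unit_set_cases: "(u::unit set) = {} \<or> u = UNIV"
  by auto

lemma uniq_part:
  assumes g: "g \<in> X \<rightarrow>\<^sub>E pt II JJ A lim"
    and spec: "\<forall>l\<in>A. {x\<in>X. g x \<in> bullet II JJ A lim l} = \<phi> l"
  shows "g = (\<lambda>x\<in>X. \<lambda>l\<in>A. if x \<in> \<phi> l then (UNIV::unit set) else {})"
proof (rule ext)
  fix x
  show "g x = (\<lambda>x\<in>X. \<lambda>l\<in>A. if x \<in> \<phi> l then (UNIV::unit set) else {}) x"
  proof (cases "x \<in> X")
    case False
    have "g x = undefined" by (rule PiE_arb[OF g False])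
    then show ?thesis using False by simp
  next
    case True
    have gx: "g x \<in> pt II JJ A lim" using g True by blast
    have gxf: "g x \<in> A \<rightarrow>\<^sub>E Pow (UNIV::unit set)" using pt_fun[OF gx] .
    have "g x l = (if x \<in> \<phi> l then UNIV else {})" if l: "l \<in> A" for l
    proof -
      have "g x l = UNIV \<longleftrightarrow> g x \<in> bullet II JJ A lim l" unfolding bullet_def mem_Collect_eq using gx by simp
      also have "\<dots> \<longleftrightarrow> x \<in> \<phi> l" using spec l True by blast
      finally have "g x l = UNIV \<longleftrightarrow> x \<in> \<phi> l" .
      moreover have "g x l = {} \<or> g x l = UNIV" using unit_set_cases by blast
      ultimately show ?thesis by auto
    qed
    moreover have "g x l = undefined" if "l \<notin> A" for l by (rule PiE_arb[OF gxf that])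
    ultimately have "g x = (\<lambda>l\<in>A. if x \<in> \<phi> l then (UNIV::unit set) else {})"
      by (intro ext) (simp add: restrict_def)
    then show ?thesis using True by simp
  qed
qed

theorem mainTheorem4:
  fixes II JJ :: "'i set set"
    and A :: "'a::order set" and lim :: "'a set \<Rightarrow> 'a"
    and X :: "'x set" and cv :: "'x set set \<Rightarrow> 'x \<Rightarrow> bool"
    and \<phi> :: "'a \<Rightarrow> 'x set"
  assumes "conv_space X cv"
    and "conv_obj A lim"
    and "conv_hom II JJ A lim (Pow X) (limP X cv) \<phi>"
  shows "(\<exists>!g. g \<in> X \<rightarrow>\<^sub>E pt II JJ A lim
             \<and> (\<forall>l\<in>A. {x\<in>X. g x \<in> bullet II JJ A lim l} = \<phi> l))
       \<and> (\<forall>g. g \<in> X \<rightarrow>\<^sub>E pt II JJ A lim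
             \<and> (\<forall>l\<in>A. {x\<in>X. g x \<in> bullet II JJ A lim l} = \<phi> l)
             \<longrightarrow> continuous_conv X cv (pt II JJ A lim) (pt_conv II JJ A lim) g)"
proof (intro conjI allI impI)
  define g0 where "g0 = (\<lambda>x\<in>X. \<lambda>l\<in>A. if x \<in> \<phi> l then (UNIV::unit set) else {})"
  have CH: "C_hom II JJ A (Pow X) \<phi>" using conv_hom_C[OF assms(3)] .
  have g0P: "g0 \<in> X \<rightarrow>\<^sub>E pt II JJ A lim"
    unfolding g0_def using point_in_pt[OF assms] by auto
  have "{x\<in>X. g0 x \<in> bullet II JJ A lim l} = \<phi> l" if l: "l \<in> A" for l
  proof -
    have sub: "\<phi> l \<subseteq> X" using C_hom_fun[OF CH] l by blast
    have "g0 x \<in> bullet II JJ A lim l \<longleftrightarrow> x \<in> \<phi> l" if x: "x \<in> X" for x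
    proof -
      have "g0 x \<in> pt II JJ A lim" using g0P x by blast
      moreover have "g0 x l = (if x \<in> \<phi> l then UNIV else {})" unfolding g0_def using x l by simp
      ultimately show ?thesis unfolding bullet_def by auto
    qed
    then show ?thesis using sub by blast
  qed
  with g0P have ex: "g0 \<in> X \<rightarrow>\<^sub>E pt II JJ A lim
             \<and> (\<forall>l\<in>A. {x\<in>X. g0 x \<in> bullet II JJ A lim l} = \<phi> l)" by blast
  show "\<exists>!g. g \<in> X \<rightarrow>\<^sub>E pt II JJ A lim
             \<and> (\<forall>l\<in>A. {x\<in>X. g x \<in> bullet II JJ A lim l} = \<phi> l)"
  proof (rule ex1I[of _ g0])
    show "g0 \<in> X \<rightarrow>\<^sub>E pt II JJ A lim
             \<and> (\<forall>l\<in>A. {x\<in>X. g0 x \<in> bullet II JJ A lim l} = \<phi> l)" using ex .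
  next
    fix g assume "g \<in> X \<rightarrow>\<^sub>E pt II JJ A lim
             \<and> (\<forall>l\<in>A. {x\<in>X. g x \<in> bullet II JJ A lim l} = \<phi> l)"
    then show "g = g0" unfolding g0_def using uniq_part by blast
  qed
next
  fix g assume "g \<in> X \<rightarrow>\<^sub>E pt II JJ A lim
             \<and> (\<forall>l\<in>A. {x\<in>X. g x \<in> bullet II JJ A lim l} = \<phi> l)"
  then show "continuous_conv X cv (pt II JJ A lim) (pt_conv II JJ A lim) g"
    using cont_part[OF assms] by blast
qed


end
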